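(* Let $n\ge2$ and $D_0>0$, and assume $\alpha>(n-1)\beta>0$. Let $p^a\in\mathbb{R}^n_{\ge0}$. Define the $n\times n$ matrix $A_n=(\alpha+\beta)I_n-\beta J_n$ (diagonal entries $\alpha$, off-diagonal entries $-\beta$), and let $E_n$ be the all-ones vector in $\mathbb{R}^n$. Consider the ex ante regulation game restricted to profiles with strictly positive demands. Among such profiles, a pure-strategy Nash equilibrium exists if and only if every entry of the vector $$(A_n+2\alpha I_n)^{-1}\,[D_0E_n+A_np^a]$$ is strictly positive. When this holds: - for every choice of the payment vector $p^d\in\mathbb{R}^n$ there is exactly one such equilibrium, so the equilibrium is unique up to a free choice of $p^d$; - there are constants $g_i,h_i$, depending only on $p^a,D_0,\alpha,\beta$, such that at equilibrium $p^s_i=g_i-p^d_i$ and $p^c_i=h_i+p^d_i$ for each $i$; - the net internaut price $p^s_i+p^c_i=g_i+h_i$ for each CP $i$ is unique and independent of $p^d$; - the equilibrium demand vector is unique and does not depend on $p^d$; - the revenues per unit demand, and hence the total revenues of the ISP and of every CP, do not depend on $p^d$.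
   Context: Setting: one ISP and $n$ content providers CP $1,\dots,n$. - $p^s=(p^s_1,\dots,p^s_n)$ are the ISP's prices per unit demand to internauts of CP $i$; $p^s$ is chosen by the ISP. - $p^c_i$ is CP $i$'s price per unit demand to its internauts, chosen by CP $i$. - $p^d_i$ is the payment per unit demand from CP $i$ to the ISP. - $p^a_i\ge0$ is CP $i$'s advertising revenue per unit demand. On the set of profiles where all demands are strictly positive, the demand for CP $i$'s content is $$d_i=D_0-\alpha(p^s_i+p^c_i)+\beta\sum_{j\ne i}(p^s_j+p^c_j).$$ Payoffs are $U_{ISP}=\sum_i d_i(p^s_i+p^d_i)$ and $U_{CP,i}=d_i(p^c_i+p^a_i-p^d_i)$. Ex ante regulation game: 1. A regulator first sets the vector $p^d$. 2. Then the ISP chooses $p^s$ and each CP $i$ chooses $p^c_i$, all simultaneously. 3. Internauts generate the demands. Strategies are jointly constrained so that all $d_i>0$. An equilibrium is a profile in this set from which no player can profitably deviate unilaterally while remaining in the set. The regulator chooses each $p^d_i$ to maximize $\big(d_i(p^s_i+p^d_i)\big)^{\gamma_i}\big(d_i(p^c_i+p^a_i-p^d_i)\big)^{1-\gamma_i}$ at the induced equilibrium, with weights $\gamma_i\in(0,1)$. *)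

theory Defs
  imports "HOL-Analysis.Analysis"
begin

text \<open>CPs are indexed by a finite type 'n (n = CARD('n)). Vectors are real^'n.\<close>

definition demand :: "real \<Rightarrow> real \<Rightarrow> real \<Rightarrow> real^'n \<Rightarrow> real^'n \<Rightarrow> 'n::finite \<Rightarrow> real" where
  "demand D0 \<alpha> \<beta> ps pc i =
     D0 - \<alpha> * (ps$i + pc$i) + \<beta> * (\<Sum>j\<in>UNIV - {i}. ps$j + pc$j)"

definition feasible :: "real \<Rightarrow> real \<Rightarrow> real \<Rightarrow> real^'n::finite \<Rightarrow> real^'n \<Rightarrow> bool" where
  "feasible D0 \<alpha> \<beta> ps pc \<longleftrightarrow> (\<forall>i. demand D0 \<alpha> \<beta> ps pc i > 0)"

definition U_ISP :: "real \<Rightarrow> real \<Rightarrow> real \<Rightarrow> real^'n::finite \<Rightarrow> real^'n \<Rightarrow> real^'n \<Rightarrow> real" where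
  "U_ISP D0 \<alpha> \<beta> pd ps pc = (\<Sum>i\<in>UNIV. demand D0 \<alpha> \<beta> ps pc i * (ps$i + pd$i))"

definition U_CP :: "real \<Rightarrow> real \<Rightarrow> real \<Rightarrow> real^'n \<Rightarrow> real^'n \<Rightarrow> real^'n \<Rightarrow> real^'n \<Rightarrow> 'n::finite \<Rightarrow> real" where
  "U_CP D0 \<alpha> \<beta> pa pd ps pc i = demand D0 \<alpha> \<beta> ps pc i * (pc$i + pa$i - pd$i)"

text \<open>Nash equilibrium of the pricing stage (for a given p^d set by the regulator),
  among profiles with strictly positive demands; deviations must stay in that set.\<close>
definition is_equilibrium ::
  "real \<Rightarrow> real \<Rightarrow> real \<Rightarrow> real^'n \<Rightarrow> real^'n \<Rightarrow> real^'n \<Rightarrow> real^'n::finite \<Rightarrow> bool" where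
  "is_equilibrium D0 \<alpha> \<beta> pa pd ps pc \<longleftrightarrow>
     feasible D0 \<alpha> \<beta> ps pc \<and>
     (\<forall>ps'. feasible D0 \<alpha> \<beta> ps' pc \<longrightarrow> U_ISP D0 \<alpha> \<beta> pd ps' pc \<le> U_ISP D0 \<alpha> \<beta> pd ps pc) \<and>
     (\<forall>i c. let pc' = (\<chi> j. if j = i then c else pc$j) in
        feasible D0 \<alpha> \<beta> ps pc' \<longrightarrow> U_CP D0 \<alpha> \<beta> pa pd ps pc' i \<le> U_CP D0 \<alpha> \<beta> pa pd ps pc i)"

definition A_mat :: "real \<Rightarrow> real \<Rightarrow> real^'n^'n::finite" where
  "A_mat \<alpha> \<beta> = (\<alpha> + \<beta>) *\<^sub>R mat 1 - \<beta> *\<^sub>R (\<chi> i j. 1)"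

definition E_vec :: "real^'n::finite" where
  "E_vec = vec 1"

end

theory Submission
  imports Defs
begin


lemma sum_minus1: "(\<Sum>j\<in>UNIV - {i}. f j) = (\<Sum>j\<in>UNIV. f j) - (f i :: real)"
  for i :: "'n::finite"
  by (simp add: sum_diff1)

lemma demand_alt: "demand D0 \<alpha> \<beta> ps pc i =
   D0 - (\<alpha>+\<beta>) * (ps$i + pc$i) + \<beta> * (\<Sum>j\<in>UNIV. ps$j + pc$j)"
  unfolding demand_def sum_minus1 by (simp add: algebra_simps)

lemma Amul: "((A_mat \<alpha> \<beta> + k *\<^sub>R mat 1) *v v)$i = (\<alpha>+\<beta>+k) * v$i - \<beta> * (\<Sum>j\<in>UNIV. v$j)"
  for v :: "real^'n::finite"
proof -
  have "((A_mat \<alpha> \<beta> + k *\<^sub>R mat 1) *v v)$i = (\<Sum>j\<in>UNIV. (if i = j then (\<alpha>+\<beta>+k) * v$j else 0) - \<beta> * v$j)"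
    unfolding A_mat_def matrix_vector_mult_def by (auto simp: mat_def algebra_simps intro!: sum.cong)
  also have "\<dots> = (\<alpha>+\<beta>+k) * v$i - \<beta> * (\<Sum>j\<in>UNIV. v$j)"
    by (simp add: sum_subtractf sum_distrib_left)
  finally show ?thesis .
qed

lemma Amul0: "(A_mat \<alpha> \<beta> *v v)$i = (\<alpha>+\<beta>) * v$i - \<beta> * (\<Sum>j\<in>UNIV. v$j)"
  for v :: "real^'n::finite"
  using Amul[of \<alpha> \<beta> 0 v i] by simp

lemma demand_A: "demand D0 \<alpha> \<beta> ps pc i = D0 - (A_mat \<alpha> \<beta> *v (ps+pc))$i"
  unfolding demand_alt Amul0 by simp

lemma inv_solve:
  fixes M :: "real^'n::finite^'n"
  assumes "invertible M" shows "M *v (matrix_inv M *v b) = b"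
proof -
  have "M ** matrix_inv M = mat 1"
    using assms unfolding invertible_def matrix_inv_def by (rule someI2_ex) auto
  then show ?thesis by (metis matrix_vector_mul_assoc matrix_vector_mul_lid)
qed

lemma Ak_inj:
  fixes v :: "real^'n::finite"
  assumes "\<alpha>+\<beta>+k - real CARD('n) * \<beta> \<noteq> 0" "\<alpha>+\<beta>+k \<noteq> 0"
    and "(A_mat \<alpha> \<beta> + k *\<^sub>R mat 1) *v v = 0"
  shows "v = 0"
proof -
  have e: "\<And>i. (\<alpha>+\<beta>+k) * v$i = \<beta> * (\<Sum>j\<in>UNIV. v$j)"
    using assms(3) Amul[of \<alpha> \<beta> k v] by (metis eq_iff_diff_eq_0 vec_lambda_unique zero_index)
  have "(\<Sum>i\<in>UNIV. (\<alpha>+\<beta>+k) * v$i) = (\<Sum>i\<in>(UNIV::'n set). \<beta> * (\<Sum>j\<in>UNIV. v$j))"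
    using e by simp
  then have "(\<alpha>+\<beta>+k) * (\<Sum>j\<in>UNIV. v$j) = real CARD('n) * \<beta> * (\<Sum>j\<in>UNIV. v$j)"
    by (simp add: sum_distrib_left mult.assoc)
  then have "(\<alpha>+\<beta>+k - real CARD('n) * \<beta>) * (\<Sum>j\<in>UNIV. v$j) = 0" by (simp add: algebra_simps)
  then have "(\<Sum>j\<in>UNIV. v$j) = 0" using assms(1) by simp
  then show ?thesis using e assms(2) by (simp add: vec_eq_iff)
qed

lemma Ak_invertible:
  fixes \<alpha> \<beta> k :: real
  assumes "\<alpha>+\<beta>+k - real CARD('n::finite) * \<beta> \<noteq> 0" "\<alpha>+\<beta>+k \<noteq> 0"
  shows "invertible (A_mat \<alpha> \<beta> + k *\<^sub>R mat 1 :: real^'n^'n)"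
  unfolding invertible_left_inverse matrix_left_invertible_ker
  using Ak_inj[OF assms] by blast


lemma zero_grad:
  fixes g c \<delta> :: real
  assumes "\<delta> > 0" "c \<ge> 0" "\<forall>t. \<bar>t\<bar> < \<delta> \<longrightarrow> t*g - c*t^2 \<le> 0"
  shows "g = 0"
proof (rule ccontr)
  assume g: "g \<noteq> 0"
  define e where "e = min (\<delta>/(2*\<bar>g\<bar>)) (1/(2*c+2))"
  have e0: "e > 0" using g assms by (simp add: e_def)
  have e1: "e * \<bar>g\<bar> \<le> \<delta>/2"
  proof -
    have "e \<le> \<delta>/(2*\<bar>g\<bar>)" by (simp add: e_def)
    then have "e * \<bar>g\<bar> \<le> \<delta>/(2*\<bar>g\<bar>) * \<bar>g\<bar>" by (rule mult_right_mono) auto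
    also have "\<dots> = \<delta>/2" using g by simp
    finally show ?thesis .
  qed
  have e2: "c * e \<le> 1/2"
  proof -
    have "e \<le> 1/(2*c+2)" by (simp add: e_def)
    then have "c*e \<le> c/(2*c+2)" using assms(2) by (metis mult_left_mono times_divide_eq_right mult_1_right)
    also have "\<dots> \<le> 1/2" using assms(2) by (simp add: field_simps)
    finally show ?thesis .
  qed
  have "\<bar>g*e\<bar> < \<delta>" using e1 e0 assms(1) by (simp add: abs_mult mult.commute)
  then have "(g*e)*g - c*(g*e)^2 \<le> 0" using assms(3) by blast
  moreover have "(g*e)*g - c*(g*e)^2 = g^2 * e * (1 - c*e)" by (simp add: algebra_simps power2_eq_square)
  moreover have "g^2 * e * (1 - c*e) > 0" using g e0 e2 by simp
  ultimately show False by linarith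
qed

lemma small_pert:
  fixes d :: "'n::finite \<Rightarrow> real"
  assumes "\<forall>j. d j > 0" "K \<ge> 0"
  shows "\<exists>\<delta>>0. \<forall>t j. \<bar>t\<bar> < \<delta> \<longrightarrow> K*\<bar>t\<bar> < d j"
proof -
  define m where "m = Min (range d)"
  have m0: "m > 0" unfolding m_def using assms(1) by (simp add: Min_gr_iff)
  have mle: "\<And>j. m \<le> d j" unfolding m_def by simp
  show ?thesis
  proof (intro exI[of _ "m/(K+1)"] conjI allI impI)
    show "m/(K+1) > 0" using m0 assms(2) by simp
    fix t j assume "\<bar>t\<bar> < m/(K+1)"
    then have "K*\<bar>t\<bar> \<le> K*(m/(K+1))" using assms(2) by (intro mult_left_mono) auto
    also have "\<dots> < m" using m0 assms(2) by (simp add: field_simps)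
    finally show "K*\<bar>t\<bar> < d j" using mle[of j] by linarith
  qed
qed

lemma demand_shift_ps:
  "demand D0 \<alpha> \<beta> (ps + h) pc k = demand D0 \<alpha> \<beta> ps pc k - (\<alpha>+\<beta>) * h$k + \<beta> * (\<Sum>j\<in>UNIV. h$j)"
  unfolding demand_alt by (simp add: sum.distrib algebra_simps)

lemma U_ISP_shift:
  fixes ps pc pd h :: "real^'n::finite"
  shows "U_ISP D0 \<alpha> \<beta> pd (ps+h) pc = U_ISP D0 \<alpha> \<beta> pd ps pc
     + (\<Sum>k\<in>UNIV. h$k * (demand D0 \<alpha> \<beta> ps pc k - (A_mat \<alpha> \<beta> *v (ps+pd))$k))
     - ((\<alpha>+\<beta>) * (\<Sum>k\<in>UNIV. (h$k)^2) - \<beta> * (\<Sum>k\<in>UNIV. h$k)^2)"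
proof -
  define d where "d k = demand D0 \<alpha> \<beta> ps pc k" for k
  define r where "r = ps + pd"
  define H where "H = (\<Sum>k\<in>UNIV. h$k)"
  define R where "R = (\<Sum>k\<in>UNIV. r$k)"
  have pw: "\<And>k. (d k - (\<alpha>+\<beta>) * h$k + \<beta> * H) * (r$k + h$k) =
      d k * r$k + h$k * (d k - ((\<alpha>+\<beta>) * r$k - \<beta> * R)) - (\<alpha>+\<beta>) * (h$k)^2 + \<beta>*H*h$k
      + (\<beta>*H*r$k - \<beta>*R*h$k)"
    by (simp add: algebra_simps power2_eq_square)
  have "U_ISP D0 \<alpha> \<beta> pd (ps+h) pc = (\<Sum>k\<in>UNIV. (d k - (\<alpha>+\<beta>) * h$k + \<beta> * H) * (r$k + h$k))"
    unfolding U_ISP_def d_def H_def r_def demand_shift_ps by (simp add: algebra_simps)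
  also have "\<dots> = (\<Sum>k\<in>UNIV. d k * r$k) + (\<Sum>k\<in>UNIV. h$k * (d k - ((\<alpha>+\<beta>) * r$k - \<beta> * R)))
      - (\<alpha>+\<beta>) * (\<Sum>k\<in>UNIV. (h$k)^2) + \<beta>*H*(\<Sum>k\<in>UNIV. h$k) + (\<beta>*H*(\<Sum>k\<in>UNIV. r$k) - \<beta>*R*(\<Sum>k\<in>UNIV. h$k))"
    unfolding pw by (simp add: sum.distrib sum_subtractf sum_distrib_left)
  also have "\<dots> = U_ISP D0 \<alpha> \<beta> pd ps pc
     + (\<Sum>k\<in>UNIV. h$k * (demand D0 \<alpha> \<beta> ps pc k - (A_mat \<alpha> \<beta> *v (ps+pd))$k))
     - ((\<alpha>+\<beta>) * (\<Sum>k\<in>UNIV. (h$k)^2) - \<beta> * (\<Sum>k\<in>UNIV. h$k)^2)"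
    unfolding U_ISP_def Amul0 d_def r_def H_def R_def by (simp add: power2_eq_square algebra_simps)
  finally show ?thesis .
qed

lemma quad_nonneg:
  fixes h :: "real^'n::finite"
  assumes "\<alpha>+\<beta> - real CARD('n) * \<beta> \<ge> 0" "\<beta> \<ge> 0"
  shows "(\<alpha>+\<beta>) * (\<Sum>k\<in>UNIV. (h$k)^2) - \<beta> * (\<Sum>k\<in>UNIV. h$k)^2 \<ge> 0"
proof -
  have "(\<Sum>k\<in>UNIV. h$k)^2 \<le> (\<Sum>k\<in>UNIV. (h$k)^2) * real CARD('n)"
    using sum_squared_le_sum_of_squares[of "\<lambda>k. h$k" UNIV] by simp
  then have "\<beta> * (\<Sum>k\<in>UNIV. h$k)^2 \<le> \<beta> * ((\<Sum>k\<in>UNIV. (h$k)^2) * real CARD('n))"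
    using assms(2) by (simp add: mult_left_mono)
  moreover have "(\<alpha>+\<beta> - real CARD('n) * \<beta>) * (\<Sum>k\<in>UNIV. (h$k)^2) \<ge> 0"
    using assms(1) by (simp add: sum_nonneg)
  ultimately show ?thesis by (simp add: algebra_simps)
qed



lemma demand_upd_pc:
  fixes pc :: "real^'n::finite"
  shows "demand D0 \<alpha> \<beta> ps (\<chi> j. if j = i then c else pc$j) j =
     demand D0 \<alpha> \<beta> ps pc j - (if j = i then (\<alpha>+\<beta>) * (c - pc$i) else 0) + \<beta> * (c - pc$i)"
proof -
  have "(\<Sum>j\<in>UNIV. ps$j + (\<chi> j. if j = i then c else pc$j)$j) = (\<Sum>j\<in>UNIV. (ps$j + pc$j) + (if j = i then c - pc$i else 0))"
    by (intro sum.cong) auto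
  also have "\<dots> = (\<Sum>j\<in>UNIV. ps$j + pc$j) + (c - pc$i)" by (simp add: sum.distrib)
  finally have S: "(\<Sum>j\<in>UNIV. ps$j + (\<chi> j. if j = i then c else pc$j)$j) = (\<Sum>j\<in>UNIV. ps$j + pc$j) + (c - pc$i)" .
  show ?thesis unfolding demand_alt S by (cases "j = i") (simp_all add: algebra_simps)
qed

lemma hsums:
  fixes k :: "'n::finite" and t :: real
  defines "h \<equiv> (\<chi> j. if j = k then t else 0) :: real^'n"
  shows "(\<Sum>j\<in>UNIV. h$j) = t" "(\<Sum>j\<in>UNIV. (h$j)^2) = t^2" "(\<Sum>j\<in>UNIV. h$j * G j) = t * G k"
proof -
  show "(\<Sum>j\<in>UNIV. h$j) = t" by (simp add: h_def)
  have "(\<Sum>j\<in>UNIV. (h$j)^2) = (\<Sum>j\<in>UNIV. if j = k then t^2 else 0)" by (intro sum.cong) (auto simp: h_def)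
  then show "(\<Sum>j\<in>UNIV. (h$j)^2) = t^2" by simp
  have "(\<Sum>j\<in>UNIV. h$j * G j) = (\<Sum>j\<in>UNIV. if j = k then t * G k else 0)" by (intro sum.cong) (auto simp: h_def)
  then show "(\<Sum>j\<in>UNIV. h$j * G j) = t * G k" by simp
qed

lemma eq_char:
  fixes pa pd ps pc :: "real^'n::finite"
  assumes ha: "\<alpha> > (real CARD('n) - 1) * \<beta>" and hb: "\<beta> > 0"
  shows "is_equilibrium D0 \<alpha> \<beta> pa pd ps pc \<longleftrightarrow> feasible D0 \<alpha> \<beta> ps pc
     \<and> (\<forall>k. demand D0 \<alpha> \<beta> ps pc k = (A_mat \<alpha> \<beta> *v (ps+pd))$k)
     \<and> (\<forall>i. demand D0 \<alpha> \<beta> ps pc i = \<alpha>*(pc$i + pa$i - pd$i))"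
proof -
  have n1: "real CARD('n) \<ge> 1" by simp
  have a0: "\<alpha> > 0"
  proof -
    have "(real CARD('n) - 1) * \<beta> \<ge> 0" using n1 hb by simp
    then show ?thesis using ha by linarith
  qed
  have q0: "\<alpha>+\<beta> - real CARD('n) * \<beta> \<ge> 0" using ha by (simp add: algebra_simps)
  show ?thesis
  proof
    assume E: "is_equilibrium D0 \<alpha> \<beta> pa pd ps pc"
    have F: "feasible D0 \<alpha> \<beta> ps pc" using E unfolding is_equilibrium_def by blast
    have Fd: "\<forall>j. demand D0 \<alpha> \<beta> ps pc j > 0" using F unfolding feasible_def by blast
    obtain \<delta> where d0: "\<delta> > 0" and dsm: "\<And>t j. \<bar>t\<bar> < \<delta> \<Longrightarrow> (\<alpha>+\<beta>)*\<bar>t\<bar> < demand D0 \<alpha> \<beta> ps pc j"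
      using small_pert[OF Fd, of "\<alpha>+\<beta>"] a0 hb by auto
    have ISP: "\<forall>k. demand D0 \<alpha> \<beta> ps pc k = (A_mat \<alpha> \<beta> *v (ps+pd))$k"
    proof
      fix k
      define g where "g = demand D0 \<alpha> \<beta> ps pc k - (A_mat \<alpha> \<beta> *v (ps+pd))$k"
      have "\<forall>t. \<bar>t\<bar> < \<delta> \<longrightarrow> t*g - \<alpha>*t^2 \<le> 0"
      proof (intro allI impI)
        fix t :: real assume t: "\<bar>t\<bar> < \<delta>"
        define h :: "real^'n" where "h = (\<chi> j. if j = k then t else 0)"
        note hs = hsums[of k t, folded h_def]
        have "feasible D0 \<alpha> \<beta> (ps+h) pc"
          unfolding feasible_def
        proof
          fix j
          have "demand D0 \<alpha> \<beta> (ps+h) pc j = demand D0 \<alpha> \<beta> ps pc j - (\<alpha>+\<beta>) * h$j + \<beta> * t"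
            using demand_shift_ps hs(1) by metis
          moreover have "(\<alpha>+\<beta>) * h$j - \<beta> * t \<le> (\<alpha>+\<beta>)*\<bar>t\<bar>"
          proof -
            have "\<alpha>*t \<le> \<alpha>*\<bar>t\<bar>" "\<beta>*t \<le> \<beta>*\<bar>t\<bar>" "\<beta>*(-t) \<le> \<beta>*\<bar>t\<bar>"
              using a0 hb by (simp_all only: mult_left_mono less_imp_le abs_ge_self abs_ge_minus_self)
            moreover have "0 \<le> \<alpha>*\<bar>t\<bar>" "0 \<le> \<beta>*\<bar>t\<bar>" using a0 hb by simp_all
            ultimately show ?thesis by (cases "j = k") (auto simp: h_def algebra_simps)
          qed
          ultimately show "demand D0 \<alpha> \<beta> (ps+h) pc j > 0" using dsm[OF t, of j] by linarith
        qed
        then have "U_ISP D0 \<alpha> \<beta> pd (ps+h) pc \<le> U_ISP D0 \<alpha> \<beta> pd ps pc"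
          using E unfolding is_equilibrium_def by blast
        then show "t*g - \<alpha>*t^2 \<le> 0"
          unfolding U_ISP_shift hs(1) hs(2) hs(3) g_def by (simp add: algebra_simps)
      qed
      then have "g = 0" using zero_grad[OF d0, of \<alpha> g] a0 by simp
      then show "demand D0 \<alpha> \<beta> ps pc k = (A_mat \<alpha> \<beta> *v (ps+pd))$k" by (simp add: g_def)
    qed
    have CP: "\<forall>i. demand D0 \<alpha> \<beta> ps pc i = \<alpha>*(pc$i + pa$i - pd$i)"
    proof
      fix i
      define s where "s = pc$i + pa$i - pd$i"
      define g where "g = demand D0 \<alpha> \<beta> ps pc i - \<alpha> * s"
      have "\<forall>t. \<bar>t\<bar> < \<delta> \<longrightarrow> t*g - \<alpha>*t^2 \<le> 0"
      proof (intro allI impI)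
        fix t :: real assume t: "\<bar>t\<bar> < \<delta>"
        define pc' where "pc' = (\<chi> j. if j = i then pc$i + t else pc$j)"
        have dem: "demand D0 \<alpha> \<beta> ps pc' j = demand D0 \<alpha> \<beta> ps pc j - (if j = i then (\<alpha>+\<beta>) * t else 0) + \<beta> * t" for j
          unfolding pc'_def demand_upd_pc by simp
        have "feasible D0 \<alpha> \<beta> ps pc'"
          unfolding feasible_def
        proof
          fix j
          have "(if j = i then (\<alpha>+\<beta>) * t else 0) - \<beta> * t \<le> (\<alpha>+\<beta>)*\<bar>t\<bar>"
          proof -
            have "\<alpha>*t \<le> \<alpha>*\<bar>t\<bar>" "\<beta>*t \<le> \<beta>*\<bar>t\<bar>" "\<beta>*(-t) \<le> \<beta>*\<bar>t\<bar>"
              using a0 hb by (simp_all only: mult_left_mono less_imp_le abs_ge_self abs_ge_minus_self)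
            moreover have "0 \<le> \<alpha>*\<bar>t\<bar>" "0 \<le> \<beta>*\<bar>t\<bar>" using a0 hb by simp_all
            ultimately show ?thesis by (cases "j = i") (auto simp: algebra_simps)
          qed
          then show "demand D0 \<alpha> \<beta> ps pc' j > 0" using dsm[OF t, of j] dem[of j] by linarith
        qed
        then have "U_CP D0 \<alpha> \<beta> pa pd ps pc' i \<le> U_CP D0 \<alpha> \<beta> pa pd ps pc i"
          using E unfolding is_equilibrium_def pc'_def Let_def by blast
        moreover have "U_CP D0 \<alpha> \<beta> pa pd ps pc' i = (demand D0 \<alpha> \<beta> ps pc i - \<alpha>*t) * (s + t)"
          unfolding U_CP_def dem by (simp add: pc'_def s_def algebra_simps)
        moreover have "U_CP D0 \<alpha> \<beta> pa pd ps pc i = demand D0 \<alpha> \<beta> ps pc i * s"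
          unfolding U_CP_def s_def by simp
        ultimately show "t*g - \<alpha>*t^2 \<le> 0" unfolding g_def by (simp add: algebra_simps power2_eq_square)
      qed
      then have "g = 0" using zero_grad[OF d0, of \<alpha> g] a0 by simp
      then show "demand D0 \<alpha> \<beta> ps pc i = \<alpha>*(pc$i + pa$i - pd$i)" by (simp add: g_def s_def)
    qed
    show "feasible D0 \<alpha> \<beta> ps pc \<and> (\<forall>k. demand D0 \<alpha> \<beta> ps pc k = (A_mat \<alpha> \<beta> *v (ps+pd))$k)
     \<and> (\<forall>i. demand D0 \<alpha> \<beta> ps pc i = \<alpha>*(pc$i + pa$i - pd$i))" using F ISP CP by blast
  next
    assume R: "feasible D0 \<alpha> \<beta> ps pc
     \<and> (\<forall>k. demand D0 \<alpha> \<beta> ps pc k = (A_mat \<alpha> \<beta> *v (ps+pd))$k)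
     \<and> (\<forall>i. demand D0 \<alpha> \<beta> ps pc i = \<alpha>*(pc$i + pa$i - pd$i))"
    have ISP: "U_ISP D0 \<alpha> \<beta> pd ps' pc \<le> U_ISP D0 \<alpha> \<beta> pd ps pc" for ps'
    proof -
      have eq: "ps' = ps + (ps' - ps)" by simp
      have z: "(\<Sum>k\<in>UNIV. (ps'-ps)$k * (demand D0 \<alpha> \<beta> ps pc k - (A_mat \<alpha> \<beta> *v (ps+pd))$k)) = 0"
        using R by simp
      show ?thesis
        using U_ISP_shift[of D0 \<alpha> \<beta> pd ps "ps'-ps" pc] z quad_nonneg[OF q0 less_imp_le[OF hb], of "ps'-ps"]
        by (simp only: eq[symmetric])
    qed
    have CP: "U_CP D0 \<alpha> \<beta> pa pd ps (\<chi> j. if j = i then c else pc$j) i \<le> U_CP D0 \<alpha> \<beta> pa pd ps pc i" for i c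
    proof -
      define s where "s = pc$i + pa$i - pd$i"
      define t where "t = c - pc$i"
      have di: "demand D0 \<alpha> \<beta> ps pc i = \<alpha> * s" using R unfolding s_def by blast
      have "U_CP D0 \<alpha> \<beta> pa pd ps (\<chi> j. if j = i then c else pc$j) i = (\<alpha> * s - \<alpha>*t) * (s + t)"
        unfolding U_CP_def demand_upd_pc di by (simp add: s_def t_def algebra_simps)
      also have "\<dots> = \<alpha> * s * s - \<alpha>*(t*t)" by (simp add: algebra_simps)
      also have "\<dots> \<le> \<alpha> * s * s" using a0 by simp
      also have "\<dots> = U_CP D0 \<alpha> \<beta> pa pd ps pc i" unfolding U_CP_def di s_def by simp
      finally show ?thesis .
    qed
    show "is_equilibrium D0 \<alpha> \<beta> pa pd ps pc"
      unfolding is_equilibrium_def Let_def using R ISP CP by blast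
  qed
qed




lemma demand_vec: "demand D0 \<alpha> \<beta> ps pc i = (D0 *\<^sub>R E_vec - A_mat \<alpha> \<beta> *v (ps+pc))$i"
  unfolding demand_A E_vec_def by simp

lemma Mmul: "(A_mat \<alpha> \<beta> + k *\<^sub>R mat 1) *v v = A_mat \<alpha> \<beta> *v v + k *\<^sub>R v"
  for v :: "real^'n::finite"
  by (simp add: matrix_vector_mult_add_rdistrib scaleR_matrix_vector_assoc[symmetric])

lemma eq_char2:
  fixes pa pd ps pc s r0 :: "real^'n::finite"
  assumes ha: "\<alpha> > (real CARD('n) - 1) * \<beta>" and hb: "\<beta> > 0"
    and Ms: "(A_mat \<alpha> \<beta> + (2*\<alpha>) *\<^sub>R mat 1) *v s = D0 *\<^sub>R E_vec + A_mat \<alpha> \<beta> *v pa"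
    and Ar: "A_mat \<alpha> \<beta> *v r0 = \<alpha> *\<^sub>R s"
  shows "is_equilibrium D0 \<alpha> \<beta> pa pd ps pc \<longleftrightarrow> (\<forall>i. s$i > 0) \<and> ps = r0 - pd \<and> pc = s - pa + pd"
proof -
  have n1: "real CARD('n) \<ge> 1" by simp
  have a0: "\<alpha> > 0"
  proof -
    have "(real CARD('n) - 1) * \<beta> \<ge> 0" using n1 hb by simp
    then show ?thesis using ha by linarith
  qed
  have invM: "\<alpha>+\<beta>+2*\<alpha> - real CARD('n) * \<beta> \<noteq> 0" "\<alpha>+\<beta>+2*\<alpha> \<noteq> 0" using ha a0 hb by (simp_all add: algebra_simps)
  have invA: "\<alpha>+\<beta>+0 - real CARD('n) * \<beta> \<noteq> 0" "\<alpha>+\<beta>+0 \<noteq> 0" using ha a0 hb by (simp_all add: algebra_simps)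
  define A :: "real^'n^'n" where "A = A_mat \<alpha> \<beta>"
  define b where "b = D0 *\<^sub>R E_vec + A *v pa"
  have Ms': "A *v s + (2*\<alpha>) *\<^sub>R s = b" using Ms unfolding Mmul A_def b_def .
  define d where "d = D0 *\<^sub>R E_vec - A *v (ps+pc)"
  have dd: "demand D0 \<alpha> \<beta> ps pc i = d$i" for i unfolding d_def A_def demand_vec ..
  show ?thesis
    unfolding eq_char[OF ha hb] feasible_def dd
  proof
    assume H: "(\<forall>i. 0 < d $ i) \<and> (\<forall>k. d $ k = (A_mat \<alpha> \<beta> *v (ps + pd)) $ k) \<and> (\<forall>i. d $ i = \<alpha> * (pc $ i + pa $ i - pd $ i))"
    define r where "r = ps + pd"
    define s' where "s' = pc + pa - pd"
    have d1: "d = A *v r" using H unfolding A_def r_def by (simp add: vec_eq_iff)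
    have "\<forall>i. d $ i = \<alpha> * (pc $ i + pa $ i - pd $ i)" using H by blast
    then have d2: "d = \<alpha> *\<^sub>R s'" unfolding s'_def by (simp add: vec_eq_iff)
    have x: "ps + pc = r + s' - pa" unfolding r_def s'_def by simp
    have "d = D0 *\<^sub>R E_vec - A *v r - A *v s' + A *v pa" unfolding d_def x by (simp add: algebra_simps)
    then have "\<alpha> *\<^sub>R s' = D0 *\<^sub>R E_vec - \<alpha> *\<^sub>R s' - A *v s' + A *v pa" using d1 d2 by simp
    moreover have two: "(2*\<alpha>) *\<^sub>R s' = \<alpha> *\<^sub>R s' + \<alpha> *\<^sub>R s'" by (metis mult_2 scaleR_add_left)
    ultimately have Ms2: "A *v s' + (2*\<alpha>) *\<^sub>R s' = b" unfolding b_def two by (simp add: algebra_simps)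
    have "(A_mat \<alpha> \<beta> + (2*\<alpha>) *\<^sub>R mat 1) *v (s' - s) = 0"
      unfolding Mmul using Ms' Ms2 unfolding A_def by (simp add: algebra_simps)
    then have "s' - s = 0" using Ak_inj[OF invM] by blast
    then have ss: "s' = s" by simp
    have "(A_mat \<alpha> \<beta> + 0 *\<^sub>R mat 1) *v (r - r0) = 0"
      using d1 d2 Ar ss unfolding A_def by (simp add: algebra_simps)
    then have "r - r0 = 0" using Ak_inj[OF invA] by blast
    then have rr: "r = r0" by simp
    have spos: "\<forall>i. s$i > 0"
    proof
      fix i have "d$i > 0" using H by blast
      then have "\<alpha> * s$i > 0" using d2 ss by simp
      then show "s$i > 0" using a0 by (simp add: zero_less_mult_iff)
    qed
    show "(\<forall>i. 0 < s $ i) \<and> ps = r0 - pd \<and> pc = s - pa + pd"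
      using spos rr ss unfolding r_def s'_def by (auto simp: algebra_simps)
  next
    assume H: "(\<forall>i. 0 < s $ i) \<and> ps = r0 - pd \<and> pc = s - pa + pd"
    then have x: "ps + pc = r0 + s - pa" by simp
    have "d = D0 *\<^sub>R E_vec - A *v r0 - A *v s + A *v pa" unfolding d_def x by (simp add: algebra_simps)
    also have "\<dots> = \<alpha> *\<^sub>R s"
    proof -
      have two: "(2*\<alpha>) *\<^sub>R s = \<alpha> *\<^sub>R s + \<alpha> *\<^sub>R s" by (metis mult_2 scaleR_add_left)
      show ?thesis using Ms' Ar unfolding b_def A_def two by (simp add: algebra_simps)
    qed
    finally have ds: "d = \<alpha> *\<^sub>R s" .
    show "(\<forall>i. 0 < d $ i) \<and> (\<forall>k. d $ k = (A_mat \<alpha> \<beta> *v (ps + pd)) $ k) \<and> (\<forall>i. d $ i = \<alpha> * (pc $ i + pa $ i - pd $ i))"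
      using H ds Ar a0 by simp
  qed
qed




theorem theorem3:
  fixes D0 \<alpha> \<beta> :: real and pa :: "real^'n::finite"
  assumes "CARD('n) \<ge> 2" and "D0 > 0" and "\<alpha> > (real CARD('n) - 1) * \<beta>" and "\<beta> > 0"
    and "\<forall>i. pa$i \<ge> 0"
  shows "(\<forall>pd. (\<exists>ps pc. is_equilibrium D0 \<alpha> \<beta> pa pd ps pc) \<longleftrightarrow>
            (\<forall>i. (matrix_inv (A_mat \<alpha> \<beta> + (2 * \<alpha>) *\<^sub>R mat 1)
                    *v (D0 *\<^sub>R E_vec + A_mat \<alpha> \<beta> *v pa)) $ i > 0))
    \<and> ((\<forall>i. (matrix_inv (A_mat \<alpha> \<beta> + (2 * \<alpha>) *\<^sub>R mat 1)
                    *v (D0 *\<^sub>R E_vec + A_mat \<alpha> \<beta> *v pa)) $ i > 0) \<longrightarrow>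
        (\<forall>pd. \<exists>!q. is_equilibrium D0 \<alpha> \<beta> pa pd (fst q) (snd q))
      \<and> (\<exists>g h :: real^'n. \<forall>pd ps pc. is_equilibrium D0 \<alpha> \<beta> pa pd ps pc \<longrightarrow>
            (\<forall>i. ps$i = g$i - pd$i \<and> pc$i = h$i + pd$i))
      \<and> (\<exists>x :: real^'n. \<forall>pd ps pc. is_equilibrium D0 \<alpha> \<beta> pa pd ps pc \<longrightarrow>
            (\<forall>i. ps$i + pc$i = x$i))
      \<and> (\<exists>dv :: real^'n. \<forall>pd ps pc. is_equilibrium D0 \<alpha> \<beta> pa pd ps pc \<longrightarrow>
            (\<forall>i. demand D0 \<alpha> \<beta> ps pc i = dv$i))
      \<and> (\<exists>rs rc :: real^'n. \<forall>pd ps pc. is_equilibrium D0 \<alpha> \<beta> pa pd ps pc \<longrightarrow>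
            (\<forall>i. ps$i + pd$i = rs$i \<and> pc$i + pa$i - pd$i = rc$i))
      \<and> (\<exists>ui :: real. \<exists>uc :: real^'n. \<forall>pd ps pc. is_equilibrium D0 \<alpha> \<beta> pa pd ps pc \<longrightarrow>
            U_ISP D0 \<alpha> \<beta> pd ps pc = ui \<and> (\<forall>i. U_CP D0 \<alpha> \<beta> pa pd ps pc i = uc$i)))"
proof -
  note ha = assms(3) and hb = assms(4)
  have n1: "real CARD('n) \<ge> 1" by simp
  have a0: "\<alpha> > 0"
  proof -
    have "(real CARD('n) - 1) * \<beta> \<ge> 0" using n1 hb by simp
    then show ?thesis using ha by linarith
  qed
  have invM: "\<alpha>+\<beta>+2*\<alpha> - real CARD('n) * \<beta> \<noteq> 0" "\<alpha>+\<beta>+2*\<alpha> \<noteq> 0" using ha a0 hb by (simp_all add: algebra_simps)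
  have invA: "\<alpha>+\<beta>+0 - real CARD('n) * \<beta> \<noteq> 0" "\<alpha>+\<beta>+0 \<noteq> 0" using ha a0 hb by (simp_all add: algebra_simps)
  define s where "s = matrix_inv (A_mat \<alpha> \<beta> + (2 * \<alpha>) *\<^sub>R mat 1) *v (D0 *\<^sub>R E_vec + A_mat \<alpha> \<beta> *v pa)"
  define r0 where "r0 = matrix_inv (A_mat \<alpha> \<beta>) *v (\<alpha> *\<^sub>R s)"
  have Ms: "(A_mat \<alpha> \<beta> + (2*\<alpha>) *\<^sub>R mat 1) *v s = D0 *\<^sub>R E_vec + A_mat \<alpha> \<beta> *v pa"
    unfolding s_def by (rule inv_solve[OF Ak_invertible[OF invM]])
  have iA: "invertible (A_mat \<alpha> \<beta> :: real^'n^'n)" using Ak_invertible[OF invA] by simp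
  have Ar: "A_mat \<alpha> \<beta> *v r0 = \<alpha> *\<^sub>R s"
    unfolding r0_def by (rule inv_solve[OF iA])
  note EC = eq_char2[OF ha hb Ms Ar]
  have EQ: "ps = r0 - pd \<and> pc = s - pa + pd \<and> (\<forall>i. demand D0 \<alpha> \<beta> ps pc i = \<alpha> * s$i)"
    if "is_equilibrium D0 \<alpha> \<beta> pa pd ps pc" for pd ps pc
  proof -
    have 1: "ps = r0 - pd \<and> pc = s - pa + pd" using that EC by blast
    have "\<forall>i. demand D0 \<alpha> \<beta> ps pc i = \<alpha>*(pc$i + pa$i - pd$i)" using that eq_char[OF ha hb] by blast
    then show ?thesis using 1 by simp
  qed
  show ?thesis
    unfolding s_def[symmetric]
  proof (intro conjI impI)
    show "\<forall>pd. (\<exists>ps pc. is_equilibrium D0 \<alpha> \<beta> pa pd ps pc) = (\<forall>i. 0 < s $ i)"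
      using EC by blast
  next
    assume sp: "\<forall>i. 0 < s $ i"
    show "\<forall>pd. \<exists>!q. is_equilibrium D0 \<alpha> \<beta> pa pd (fst q) (snd q)"
    proof
      fix pd
      show "\<exists>!q. is_equilibrium D0 \<alpha> \<beta> pa pd (fst q) (snd q)"
      proof (rule ex1I[of _ "(r0 - pd, s - pa + pd)"])
        show "is_equilibrium D0 \<alpha> \<beta> pa pd (fst (r0 - pd, s - pa + pd)) (snd (r0 - pd, s - pa + pd))"
          using EC sp by simp
        fix q assume "is_equilibrium D0 \<alpha> \<beta> pa pd (fst q) (snd q)"
        then have "fst q = r0 - pd" "snd q = s - pa + pd" using EQ by blast+
        then show "q = (r0 - pd, s - pa + pd)" by (simp add: prod_eq_iff)
      qed
    qed
    show "\<exists>g h :: real^'n. \<forall>pd ps pc. is_equilibrium D0 \<alpha> \<beta> pa pd ps pc \<longrightarrow>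
            (\<forall>i. ps$i = g$i - pd$i \<and> pc$i = h$i + pd$i)"
      by (rule exI[of _ r0], rule exI[of _ "s - pa"]) (auto dest: EQ)
    show "\<exists>x :: real^'n. \<forall>pd ps pc. is_equilibrium D0 \<alpha> \<beta> pa pd ps pc \<longrightarrow>
            (\<forall>i. ps$i + pc$i = x$i)"
      by (rule exI[of _ "r0 + s - pa"]) (auto dest: EQ)
    show "\<exists>dv :: real^'n. \<forall>pd ps pc. is_equilibrium D0 \<alpha> \<beta> pa pd ps pc \<longrightarrow>
            (\<forall>i. demand D0 \<alpha> \<beta> ps pc i = dv$i)"
      by (rule exI[of _ "\<alpha> *\<^sub>R s"]) (auto dest: EQ)
    show "\<exists>rs rc :: real^'n. \<forall>pd ps pc. is_equilibrium D0 \<alpha> \<beta> pa pd ps pc \<longrightarrow>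
            (\<forall>i. ps$i + pd$i = rs$i \<and> pc$i + pa$i - pd$i = rc$i)"
      by (rule exI[of _ r0], rule exI[of _ s]) (auto dest: EQ)
    show "\<exists>ui :: real. \<exists>uc :: real^'n. \<forall>pd ps pc. is_equilibrium D0 \<alpha> \<beta> pa pd ps pc \<longrightarrow>
            U_ISP D0 \<alpha> \<beta> pd ps pc = ui \<and> (\<forall>i. U_CP D0 \<alpha> \<beta> pa pd ps pc i = uc$i)"
    proof (intro exI allI impI conjI)
      fix pd ps pc assume e: "is_equilibrium D0 \<alpha> \<beta> pa pd ps pc"
      note E = EQ[OF e]
      show "U_ISP D0 \<alpha> \<beta> pd ps pc = (\<Sum>i\<in>UNIV. \<alpha> * s$i * r0$i)"
        unfolding U_ISP_def
      proof (rule sum.cong)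
        fix i show "demand D0 \<alpha> \<beta> ps pc i * (ps $ i + pd $ i) = \<alpha> * s$i * r0$i"
        proof -
          have "demand D0 \<alpha> \<beta> ps pc i = \<alpha> * s$i" using E by blast
          moreover have "ps $ i + pd $ i = r0$i" using E by simp
          ultimately show ?thesis by simp
        qed
      qed simp
      fix i
      show "U_CP D0 \<alpha> \<beta> pa pd ps pc i = (\<chi> i. \<alpha> * s$i * s$i) $ i"
      proof -
        have "demand D0 \<alpha> \<beta> ps pc i = \<alpha> * s$i" using E by blast
        moreover have "pc $ i + pa $ i - pd $ i = s$i" using E by simp
        ultimately show ?thesis unfolding U_CP_def by simp
      qed
    qed
  qed
qed


end
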